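(* Let $q\in\mathbb C\setminus\{0\}$ with $q^2\ne1$, $n\ge1$, $\eta_1,\dots,\eta_n\in\mathbb C\setminus\{0\}$ and $\alpha_1,\dots,\alpha_n\in\mathbb Z_{\ge0}$, such that all denominators below are nonzero. Then $$\sum_{a=1}^{n}[\alpha_a]\prod_{i\ne a}\frac{q^{\alpha_a}\eta_i/\eta_a-\eta_a/(q^{\alpha_a}\eta_i)}{q^{\alpha_a-\alpha_i}\eta_i/\eta_a-\eta_a/(q^{\alpha_a-\alpha_i}\eta_i)}=\Big[\sum_{a=1}^n\alpha_a\Big],$$ where $[r]=(q^r-q^{-r})/(q-q^{-1})$. *)

theory Defs
  imports Complex_Main
begin

definition qnum :: "complex \<Rightarrow> int \<Rightarrow> complex" where
  "qnum q r = (q powi r - q powi (- r)) / (q - inverse q)"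

end

theory Submission
  imports Defs
begin
lemma pf:
  fixes x z :: "nat \<Rightarrow> complex"
  assumes "finite S" "\<And>a i. a \<in> S \<Longrightarrow> i \<in> S \<Longrightarrow> i \<noteq> a \<Longrightarrow> z i \<noteq> z a"
  shows "\<And>w. w \<notin> z ` S \<Longrightarrow> (\<Prod>i\<in>S. (w - x i)/(w - z i)) =
     1 + (\<Sum>a\<in>S. (z a - x a)/(w - z a) * (\<Prod>i\<in>S-{a}. (z a - x i)/(z a - z i)))"
  using assms
proof (induction S rule: finite_induct)
  case empty
  then show ?case by simp
next
  case (insert b S)
  have dS: "\<And>a i. a \<in> S \<Longrightarrow> i \<in> S \<Longrightarrow> i \<noteq> a \<Longrightarrow> z i \<noteq> z a"
    using insert.prems by auto
  have zb: "z b \<notin> z ` S" using insert.prems(2) insert.hyps(2) by force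
  have wb: "w \<noteq> z b" and wS: "w \<notin> z ` S" using insert.prems by auto
  define c where "c a = (z a - x a) * (\<Prod>i\<in>S-{a}. (z a - x i)/(z a - z i))" for a
  have IHw: "(\<Prod>i\<in>S. (w - x i)/(w - z i)) = 1 + (\<Sum>a\<in>S. c a / (w - z a))"
    using insert.IH[OF wS dS] unfolding c_def by (simp add: algebra_simps)
  have IHb: "(\<Prod>i\<in>S. (z b - x i)/(z b - z i)) = 1 + (\<Sum>a\<in>S. c a / (z b - z a))"
    using insert.IH[OF zb dS] unfolding c_def by (simp add: algebra_simps)
  have split: "(\<Sum>a\<in>insert b S. (z a - x a)/(w - z a) * (\<Prod>i\<in>insert b S-{a}. (z a - x i)/(z a - z i)))
     = (\<Sum>a\<in>S. c a /(w - z a) * ((z a - x b)/(z a - z b))) + (z b - x b)/(w - z b) * (\<Prod>i\<in>S. (z b - x i)/(z b - z i))"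
  proof -
    have 1: "insert b S - {b} = S" using insert.hyps by auto
    have 2: "\<And>a. a \<in> S \<Longrightarrow> insert b S - {a} = insert b (S - {a})" using insert.hyps by auto
    have "(\<Sum>a\<in>S. (z a - x a)/(w - z a) * (\<Prod>i\<in>insert b S-{a}. (z a - x i)/(z a - z i)))
        = (\<Sum>a\<in>S. c a /(w - z a) * ((z a - x b)/(z a - z b)))"
    proof (rule sum.cong[OF refl])
      fix a assume a: "a \<in> S"
      have "(\<Prod>i\<in>insert b S-{a}. (z a - x i)/(z a - z i)) = (z a - x b)/(z a - z b) * (\<Prod>i\<in>S-{a}. (z a - x i)/(z a - z i))"
        unfolding 2[OF a] using insert.hyps by (subst prod.insert) auto
      then show "(z a - x a)/(w - z a) * (\<Prod>i\<in>insert b S-{a}. (z a - x i)/(z a - z i)) = c a /(w - z a) * ((z a - x b)/(z a - z b))"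
        unfolding c_def by simp
    qed
    then show ?thesis using insert.hyps by (simp add: 1)
  qed
  have trm: "c a / (w - z a) * ((w - x b)/(w - z b)) = c a /(w - z a) * ((z a - x b)/(z a - z b)) + (z b - x b)/(w - z b) * (c a / (z b - z a))"
    if a: "a \<in> S" for a
  proof -
    have "w \<noteq> z a" using wS a by auto
    moreover have "z a \<noteq> z b" using zb a by (metis image_eqI)
    ultimately have h: "w - z a \<noteq> 0" "w - z b \<noteq> 0" "z a - z b \<noteq> 0" using wb by auto
    have e: "z b - z a = - (z a - z b)" by simp
    show ?thesis unfolding e using h
      apply (simp add: divide_simps)
      by (simp add: algebra_simps)
  qed
  have "(\<Prod>i\<in>insert b S. (w - x i)/(w - z i)) = (1 + (\<Sum>a\<in>S. c a / (w - z a))) * ((w - x b)/(w - z b))"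
    using insert.hyps IHw by (simp add: mult.commute)
  also have "\<dots> = (w - x b)/(w - z b) + (\<Sum>a\<in>S. c a / (w - z a) * ((w - x b)/(w - z b)))"
    by (simp only: distrib_right sum_distrib_right mult_1_left)
  also have "\<dots> = (w - x b)/(w - z b) + (\<Sum>a\<in>S. c a /(w - z a) * ((z a - x b)/(z a - z b)))
       + (z b - x b)/(w - z b) * (\<Sum>a\<in>S. c a / (z b - z a))"
  proof -
    have s1: "(\<Sum>a\<in>S. c a / (w - z a) * ((w - x b)/(w - z b))) = (\<Sum>a\<in>S. c a /(w - z a) * ((z a - x b)/(z a - z b)) + (z b - x b)/(w - z b) * (c a / (z b - z a)))"
      by (rule sum.cong[OF refl]) (rule trm)
    show ?thesis by (simp only: s1 sum.distrib sum_distrib_left add.assoc)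
  qed
  also have "(w - x b)/(w - z b) = 1 + (z b - x b)/(w - z b)" using wb by (simp add: field_simps)
  finally show ?case unfolding split IHb by (simp add: algebra_simps)
qed

lemma termconv:
  fixes Qa Qi ea ei :: complex
  assumes "Qa \<noteq> 0" "Qi \<noteq> 0" "ea \<noteq> 0" "ei \<noteq> 0"
    "(Qa/Qi) * ei / ea - ea / ((Qa/Qi) * ei) \<noteq> 0"
  shows "(Qa * ei / ea - ea / (Qa * ei)) / ((Qa/Qi) * ei / ea - ea / ((Qa/Qi) * ei))
     = inverse Qi * ((ei^2 - ea^2/Qa^2)/(ei^2/Qi^2 - ea^2/Qa^2))"
    and "ei^2/Qi^2 \<noteq> ea^2/Qa^2"
proof -
  have "(Qa/Qi) * ei / ea - ea / ((Qa/Qi) * ei) = (Qa^2*ei^2 - Qi^2*ea^2)/(Qa*Qi*ei*ea)"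
    using assms by (simp add: field_simps power2_eq_square)
  then have D: "Qa^2*ei^2 - Qi^2*ea^2 \<noteq> 0" using assms(5) by auto
  show "ei^2/Qi^2 \<noteq> ea^2/Qa^2" using D assms(1-4) by (simp add: field_simps)
  show "(Qa * ei / ea - ea / (Qa * ei)) / ((Qa/Qi) * ei / ea - ea / ((Qa/Qi) * ei))
     = inverse Qi * ((ei^2 - ea^2/Qa^2)/(ei^2/Qi^2 - ea^2/Qa^2))"
    using assms(1-4) D by (simp add: field_simps power2_eq_square)
qed

theorem mainTheorem6:
  fixes q :: complex and n :: nat and \<eta> :: "nat \<Rightarrow> complex" and \<alpha> :: "nat \<Rightarrow> nat"
  assumes "q \<noteq> 0" and "q^2 \<noteq> 1" and "n \<ge> 1"
    and "\<And>i. i \<in> {1..n} \<Longrightarrow> \<eta> i \<noteq> 0"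
    and "\<And>a i. a \<in> {1..n} \<Longrightarrow> i \<in> {1..n} \<Longrightarrow> i \<noteq> a \<Longrightarrow>
      q powi (int (\<alpha> a) - int (\<alpha> i)) * \<eta> i / \<eta> a
        - \<eta> a / (q powi (int (\<alpha> a) - int (\<alpha> i)) * \<eta> i) \<noteq> 0"
  shows "(\<Sum>a=1..n. qnum q (int (\<alpha> a)) *
            (\<Prod>i\<in>{1..n} - {a}.
               (q ^ (\<alpha> a) * \<eta> i / \<eta> a - \<eta> a / (q ^ (\<alpha> a) * \<eta> i)) /
               (q powi (int (\<alpha> a) - int (\<alpha> i)) * \<eta> i / \<eta> a
                  - \<eta> a / (q powi (int (\<alpha> a) - int (\<alpha> i)) * \<eta> i))))
         = qnum q (int (\<Sum>a=1..n. \<alpha> a))"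
proof -
  define S where "S = {1..n}"
  define Q where "Q i = q ^ \<alpha> i" for i
  define x where "x i = \<eta> i ^ 2" for i
  define z where "z i = \<eta> i ^ 2 / Q i ^ 2" for i
  define R where "R a = (\<Prod>i\<in>S-{a}. (x i - z a)/(z i - z a))" for a
  define A where "A = (\<Sum>a\<in>S. \<alpha> a)"
  define QA where "QA = q ^ A"
  have fin: "finite S" unfolding S_def by simp
  have Qnz: "Q i \<noteq> 0" for i using assms(1) unfolding Q_def by simp
  have QAnz: "QA \<noteq> 0" using assms(1) unfolding QA_def by simp
  have QA: "QA = (\<Prod>i\<in>S. Q i)" unfolding QA_def A_def Q_def by (simp add: power_sum)
  have pw: "q powi (int (\<alpha> a) - int (\<alpha> i)) = Q a / Q i" for a i
    unfolding Q_def using assms(1) by (simp add: power_int_diff)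
  have fac: "(q ^ (\<alpha> a) * \<eta> i / \<eta> a - \<eta> a / (q ^ (\<alpha> a) * \<eta> i)) /
               (q powi (int (\<alpha> a) - int (\<alpha> i)) * \<eta> i / \<eta> a
                  - \<eta> a / (q powi (int (\<alpha> a) - int (\<alpha> i)) * \<eta> i))
           = inverse (Q i) * ((x i - z a)/(z i - z a))"
       and zd: "z i \<noteq> z a"
    if a: "a \<in> S" and i: "i \<in> S" and ia: "i \<noteq> a" for a i
  proof -
    have h: "(Q a/Q i) * \<eta> i / \<eta> a - \<eta> a / ((Q a/Q i) * \<eta> i) \<noteq> 0"
      using assms(5)[of a i] a i ia unfolding S_def pw by auto
    have nz: "\<eta> a \<noteq> 0" "\<eta> i \<noteq> 0" using assms(4) a i unfolding S_def by auto
    note tc = termconv[OF Qnz[of a] Qnz[of i] nz h]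
    show "z i \<noteq> z a" using tc(2) unfolding z_def x_def by simp
    show "(q ^ (\<alpha> a) * \<eta> i / \<eta> a - \<eta> a / (q ^ (\<alpha> a) * \<eta> i)) /
               (q powi (int (\<alpha> a) - int (\<alpha> i)) * \<eta> i / \<eta> a
                  - \<eta> a / (q powi (int (\<alpha> a) - int (\<alpha> i)) * \<eta> i))
           = inverse (Q i) * ((x i - z a)/(z i - z a))"
      using tc(1) unfolding pw z_def x_def by (simp add: Q_def)
  qed
  have prodeq: "(\<Prod>i\<in>S - {a}.
               (q ^ (\<alpha> a) * \<eta> i / \<eta> a - \<eta> a / (q ^ (\<alpha> a) * \<eta> i)) /
               (q powi (int (\<alpha> a) - int (\<alpha> i)) * \<eta> i / \<eta> a
                  - \<eta> a / (q powi (int (\<alpha> a) - int (\<alpha> i)) * \<eta> i)))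
        = Q a / QA * R a" if a: "a \<in> S" for a
  proof -
    have "(\<Prod>i\<in>S - {a}.
               (q ^ (\<alpha> a) * \<eta> i / \<eta> a - \<eta> a / (q ^ (\<alpha> a) * \<eta> i)) /
               (q powi (int (\<alpha> a) - int (\<alpha> i)) * \<eta> i / \<eta> a
                  - \<eta> a / (q powi (int (\<alpha> a) - int (\<alpha> i)) * \<eta> i)))
        = (\<Prod>i\<in>S - {a}. inverse (Q i) * ((x i - z a)/(z i - z a)))"
      by (rule prod.cong[OF refl]) (use fac a in auto)
    also have "\<dots> = (\<Prod>i\<in>S - {a}. inverse (Q i)) * R a"
      unfolding R_def by (rule prod.distrib)
    also have "(\<Prod>i\<in>S - {a}. inverse (Q i)) = Q a / QA"
    proof -
      have "QA = Q a * (\<Prod>i\<in>S - {a}. Q i)" unfolding QA using fin a by (simp add: prod.remove)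
      moreover have "(\<Prod>i\<in>S - {a}. inverse (Q i)) = inverse (\<Prod>i\<in>S - {a}. Q i)"
        using prod_inversef[of Q "S - {a}"] by (simp add: comp_def)
      ultimately show ?thesis using Qnz[of a] QAnz by (simp add: field_simps)
    qed
    finally show ?thesis .
  qed
  have znz: "z i \<noteq> 0" if "i \<in> S" for i
    using assms(4) that Qnz[of i] unfolding z_def S_def by auto
  have "(\<Prod>i\<in>S. (0 - x i)/(0 - z i)) =
     1 + (\<Sum>a\<in>S. (z a - x a)/(0 - z a) * (\<Prod>i\<in>S-{a}. (z a - x i)/(z a - z i)))"
    by (rule pf[OF fin]) (use zd znz in auto)
  moreover have "(\<Prod>i\<in>S. (0 - x i)/(0 - z i)) = QA^2"
  proof -
    have "(\<Prod>i\<in>S. (0 - x i)/(0 - z i)) = (\<Prod>i\<in>S. Q i ^ 2)"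
      by (rule prod.cong[OF refl]) (use znz Qnz in \<open>auto simp: z_def x_def field_simps\<close>)
    then show ?thesis unfolding QA by (simp add: prod_power_distrib)
  qed
  moreover have "(\<Sum>a\<in>S. (z a - x a)/(0 - z a) * (\<Prod>i\<in>S-{a}. (z a - x i)/(z a - z i)))
      = (\<Sum>a\<in>S. (Q a ^ 2 - 1) * R a)"
  proof (rule sum.cong[OF refl])
    fix a assume a: "a \<in> S"
    have "(z a - x a)/(0 - z a) = Q a ^ 2 - 1" using znz[OF a] Qnz[of a]
      by (auto simp: z_def x_def field_simps)
    moreover have "(\<Prod>i\<in>S-{a}. (z a - x i)/(z a - z i)) = R a"
      unfolding R_def by (rule prod.cong[OF refl]) (metis minus_diff_eq divide_minus_left divide_minus_right minus_minus)
    ultimately show "(z a - x a)/(0 - z a) * (\<Prod>i\<in>S-{a}. (z a - x i)/(z a - z i)) = (Q a ^ 2 - 1) * R a"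
      by simp
  qed
  ultimately have key: "(\<Sum>a\<in>S. (Q a ^ 2 - 1) * R a) = QA^2 - 1" by (metis add_diff_cancel_left')
  have qq: "q - inverse q \<noteq> 0"
  proof
    assume "q - inverse q = 0"
    then have "q * q = 1" using assms(1) by (simp add: field_simps)
    then show False using assms(2) by (simp add: power2_eq_square)
  qed
  have qn: "qnum q (int k) = (q^k - inverse (q^k)) / (q - inverse q)" for k
    unfolding qnum_def by (simp add: power_int_minus)
  have "(\<Sum>a\<in>S. qnum q (int (\<alpha> a)) * (Q a / QA * R a))
      = (\<Sum>a\<in>S. (Q a ^ 2 - 1) * R a) / ((q - inverse q) * QA)"
    unfolding sum_divide_distrib
  proof (rule sum.cong[OF refl])
    fix a
    show "qnum q (int (\<alpha> a)) * (Q a / QA * R a) = (Q a ^ 2 - 1) * R a / ((q - inverse q) * QA)"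
      unfolding qn Q_def[symmetric] using Qnz[of a] QAnz qq
      by (simp add: divide_simps power2_eq_square)
  qed
  also have "\<dots> = (QA - inverse QA) / (q - inverse q)"
    unfolding key using QAnz qq by (simp add: divide_simps power2_eq_square)
  finally have fin2: "(\<Sum>a\<in>S. qnum q (int (\<alpha> a)) * (Q a / QA * R a)) = qnum q (int A)"
    unfolding qn QA_def .
  have "(\<Sum>a\<in>S. qnum q (int (\<alpha> a)) *
            (\<Prod>i\<in>S - {a}.
               (q ^ (\<alpha> a) * \<eta> i / \<eta> a - \<eta> a / (q ^ (\<alpha> a) * \<eta> i)) /
               (q powi (int (\<alpha> a) - int (\<alpha> i)) * \<eta> i / \<eta> a
                  - \<eta> a / (q powi (int (\<alpha> a) - int (\<alpha> i)) * \<eta> i))))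
      = (\<Sum>a\<in>S. qnum q (int (\<alpha> a)) * (Q a / QA * R a))"
    by (rule sum.cong[OF refl]) (simp add: prodeq)
  then show ?thesis using fin2 unfolding S_def A_def by simp
qed
end
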